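(* Let $\mathcal{X}$ be a finite set of actions, $\mathcal{Y}$ a finite set of responses, $\mathcal{H}\subseteq\mathcal{Y}^{\mathcal{X}}$, $\mathrm{cost}:\mathcal{X}\times\mathcal{Y}\to\mathbb{R}_+$, $Q>0$, and let $f:2^{\mathcal{X}\times\mathcal{Y}}\to\mathbb{R}_+$ be a learning objective for $\mathcal{H}$. If there exists an optimal algorithm for $f$ (and $Q$, $\mathcal{H}$), then there exists a bifurcating optimal algorithm for $f,\mathcal{H}$.
   Context: The true state is an unknown $h^*\in\mathcal{H}$. An interactive algorithm $\mathcal{A}$, given the set $S\subseteq\mathcal{X}\times\mathcal{Y}$ of pairs observed so far, outputs either an action $\mathcal{A}(S)\in\mathcal{X}$ (yielding the pair $(x,h^*(x))$, which is added to $S$) or terminates. $S^h_t[\mathcal{A}]$ is the set of pairs collected in the first $t$ iterations and $S^h[\mathcal{A}]$ the set collected until termination, when $h^*=h$. $\mathrm{cost}(S)=\sum_{(x,y)\in S}\mathrm{cost}(x,y)$, $\mathrm{cost}(\mathcal{A})=\max_{h\in\mathcal{H}}\mathrm{cost}(S^h[\mathcal{A}])$. An optimal algorithm is an interactive algorithm with $f(S^h[\mathcal{A}])\ge Q$ for all $h\in\mathcal{H}$ whose cost $\mathrm{cost}(\mathcal{A})$ equals the minimum of $\mathrm{cost}$ over all such algorithms. Version space $V(S)=\{h\in\mathcal{H}\mid \forall(x,y)\in S,\ y=h(x)\}$. $f$ is a learning objective for $\mathcal{H}$ if $f(S)=g(V(S))$ for some monotone non-increasing $g$. Let $\mathcal{Y}(x,S):=\{h(x)\mid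 h\in V(S)\}$. $\mathcal{A}$ is bifurcating for $\mathcal{H}$ if for all $t$ and $h\in\mathcal{H}$ (at which $\mathcal{A}$ selects an action), $|\mathcal{Y}(\mathcal{A}(S^h_t[\mathcal{A}]),S^h_t[\mathcal{A}])|\ge 2$. *)

theory Defs
  imports Complex_Main
begin

text \<open>Actions are elements of the finite type 'x, responses of the finite type 'y.
  An interactive algorithm maps the set of observed pairs to either an action
  (Some x) or termination (None).\<close>

type_synonym ('x, 'y) alg = "('x \<times> 'y) set \<Rightarrow> 'x option"

fun run :: "('x, 'y) alg \<Rightarrow> ('x \<Rightarrow> 'y) \<Rightarrow> nat \<Rightarrow> ('x \<times> 'y) set" where
  "run A h 0 = {}"
| "run A h (Suc t) = (case A (run A h t) of
       None \<Rightarrow> run A h t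
     | Some x \<Rightarrow> insert (x, h x) (run A h t))"

definition terminates :: "('x, 'y) alg \<Rightarrow> ('x \<Rightarrow> 'y) \<Rightarrow> bool" where
  "terminates A h \<longleftrightarrow> (\<exists>t. A (run A h t) = None)"

definition final :: "('x, 'y) alg \<Rightarrow> ('x \<Rightarrow> 'y) \<Rightarrow> ('x \<times> 'y) set" where
  "final A h = run A h (LEAST t. A (run A h t) = None)"

definition cost_set :: "('x \<Rightarrow> 'y \<Rightarrow> real) \<Rightarrow> ('x \<times> 'y) set \<Rightarrow> real" where
  "cost_set c S = (\<Sum>(x, y)\<in>S. c x y)"

definition alg_cost :: "('x \<Rightarrow> 'y \<Rightarrow> real) \<Rightarrow> ('x \<Rightarrow> 'y) set \<Rightarrow> ('x, 'y) alg \<Rightarrow> real" where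
  "alg_cost c H A = Max ((\<lambda>h. cost_set c (final A h)) ` H)"

definition version_space :: "('x \<Rightarrow> 'y) set \<Rightarrow> ('x \<times> 'y) set \<Rightarrow> ('x \<Rightarrow> 'y) set" where
  "version_space H S = {h \<in> H. \<forall>(x, y)\<in>S. y = h x}"

definition resp_set :: "('x \<Rightarrow> 'y) set \<Rightarrow> 'x \<Rightarrow> ('x \<times> 'y) set \<Rightarrow> 'y set" where
  "resp_set H x S = (\<lambda>h. h x) ` version_space H S"

definition learning_objective :: "(('x \<times> 'y) set \<Rightarrow> real) \<Rightarrow> ('x \<Rightarrow> 'y) set \<Rightarrow> bool" where
  "learning_objective f H \<longleftrightarrow>
     (\<exists>g :: ('x \<Rightarrow> 'y) set \<Rightarrow> real.
        (\<forall>V1 V2. V1 \<subseteq> V2 \<longrightarrow> V2 \<subseteq> H \<longrightarrow> g V2 \<le> g V1) \<and>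
        (\<forall>S. f S = g (version_space H S)))"

definition achieves :: "(('x \<times> 'y) set \<Rightarrow> real) \<Rightarrow> real \<Rightarrow> ('x \<Rightarrow> 'y) set \<Rightarrow> ('x, 'y) alg \<Rightarrow> bool" where
  "achieves f Q H A \<longleftrightarrow> (\<forall>h\<in>H. terminates A h \<and> f (final A h) \<ge> Q)"

definition optimal_alg ::
  "('x \<Rightarrow> 'y \<Rightarrow> real) \<Rightarrow> (('x \<times> 'y) set \<Rightarrow> real) \<Rightarrow> real \<Rightarrow> ('x \<Rightarrow> 'y) set \<Rightarrow> ('x, 'y) alg \<Rightarrow> bool" where
  "optimal_alg c f Q H A \<longleftrightarrow>
     achieves f Q H A \<and> (\<forall>B. achieves f Q H B \<longrightarrow> alg_cost c H A \<le> alg_cost c H B)"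

definition bifurcating :: "('x \<Rightarrow> 'y) set \<Rightarrow> ('x, 'y) alg \<Rightarrow> bool" where
  "bifurcating H A \<longleftrightarrow>
     (\<forall>t. \<forall>h\<in>H. \<forall>x. A (run A h t) = Some x \<longrightarrow> card (resp_set H x (run A h t)) \<ge> 2)"

end

theory Submission
  imports Defs
begin

definition Pb :: "('x, 'y) alg \<Rightarrow> ('x \<Rightarrow> 'y) set \<Rightarrow> ('x \<Rightarrow> 'y) \<Rightarrow> ('x \<times> 'y) set \<Rightarrow> nat \<Rightarrow> bool" where
  "Pb A H h S t \<longleftrightarrow> (case A (run A h t) of None \<Rightarrow> True
      | Some x \<Rightarrow> 2 \<le> card (resp_set H x (run A h t)) \<and> (x, h x) \<notin> S)"

definition tau where "tau A H h S = (LEAST t. Pb A H h S t)"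

definition Bif :: "('x, 'y) alg \<Rightarrow> ('x \<Rightarrow> 'y) set \<Rightarrow> ('x, 'y) alg" where
  "Bif A H S = (if version_space H S = {} then None else
     A (run A (SOME h. h \<in> version_space H S) (tau A H (SOME h. h \<in> version_space H S) S)))"

lemma run_mono: "s \<le> t \<Longrightarrow> run A h s \<subseteq> run A h t"
proof (induction t)
  case 0 then show ?case by simp
next
  case (Suc t)
  show ?case
  proof (cases "s = Suc t")
    case False
    then have "run A h s \<subseteq> run A h t" using Suc by simp
    then show ?thesis by (auto split: option.splits)
  qed simp
qed

lemma run_graph: "(x, y) \<in> run A h t \<Longrightarrow> y = h x"
  by (induction t) (auto split: option.splits)

lemma vs_anti: "S \<subseteq> T \<Longrightarrow> version_space H T \<subseteq> version_space H S"
  unfolding version_space_def by blast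

lemma in_vs_run: "h \<in> H \<Longrightarrow> h \<in> version_space H (run A h t)"
  unfolding version_space_def using run_graph by fastforce

lemma card_lt2_eq:
  assumes "\<not> 2 \<le> card (resp_set H x T)" "h \<in> version_space H T" "h0 \<in> version_space H T"
  shows "h0 x = (h x :: 'y::finite)"
proof -
  have fin: "finite (resp_set H x T)" by simp
  have "h x \<in> resp_set H x T" "h0 x \<in> resp_set H x T" using assms unfolding resp_set_def by auto
  show ?thesis
  proof (rule ccontr)
    assume ne: "h0 x \<noteq> h x"
    have "card {h x, h0 x} \<le> card (resp_set H x T)"
      using \<open>h x \<in> _\<close> \<open>h0 x \<in> _\<close> fin by (intro card_mono) auto
    then show False using ne assms(1) by simp
  qed
qed

lemma Pb_ex:
  assumes "A (run A h t) = None" shows "\<exists>t. Pb A H h S t"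
  using assms unfolding Pb_def by (intro exI[of _ t]) simp

lemma Pb_anti: "Pb A H h S' s \<Longrightarrow> S \<subseteq> S' \<Longrightarrow> Pb A H h S s"
  unfolding Pb_def by (auto split: option.splits)

lemma key:
  fixes H :: "('x \<Rightarrow> 'y::finite) set"
  assumes h: "h \<in> version_space H S" and h0: "h0 \<in> version_space H S"
    and tm: "A (run A h t) = None"
  shows "\<forall>s \<le> tau A H h S. run A h0 s = run A h s"
    "tau A H h0 S = tau A H h S"
proof -
  define \<tau> where "\<tau> = tau A H h S"
  have hH: "h \<in> H" and h0H: "h0 \<in> H" using h h0 unfolding version_space_def by auto
  have notP: "\<not> Pb A H h S s" if "s < \<tau>" for s
    using that unfolding \<tau>_def tau_def by (rule not_less_Least)
  have P: "Pb A H h S \<tau>" unfolding \<tau>_def tau_def by (rule LeastI_ex) (rule Pb_ex[of A h t H S, OF tm])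
  have IH: "s \<le> \<tau> \<longrightarrow> run A h0 s = run A h s \<and> h0 \<in> version_space H (run A h s)" for s
  proof (induction s)
    case 0 then show ?case using h0H by (simp add: version_space_def)
  next
    case (Suc s)
    show ?case
    proof
      assume le: "Suc s \<le> \<tau>"
      then have eq: "run A h0 s = run A h s" and inv: "h0 \<in> version_space H (run A h s)"
        using Suc by auto
      have np: "\<not> Pb A H h S s" using notP le by simp
      then obtain x where x: "A (run A h s) = Some x" unfolding Pb_def by (auto split: option.splits)
      have hx: "h0 x = h x"
      proof (cases "2 \<le> card (resp_set H x (run A h s))")
        case True
        then have "(x, h x) \<in> S" using np x unfolding Pb_def by simp
        then show ?thesis using h0 unfolding version_space_def by auto
      next
        case False
        then show ?thesis using card_lt2_eq[OF False in_vs_run[OF hH] inv] by simp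
      qed
      show "run A h0 (Suc s) = run A h (Suc s) \<and> h0 \<in> version_space H (run A h (Suc s))"
        using eq inv x hx by (auto simp: version_space_def)
    qed
  qed
  then show "\<forall>s \<le> tau A H h S. run A h0 s = run A h s" unfolding \<tau>_def by blast
  have same: "Pb A H h0 S s = Pb A H h S s" if "s \<le> \<tau>" for s
  proof -
    have "run A h0 s = run A h s" using IH that by blast
    moreover have "(x, h0 x) \<in> S \<longleftrightarrow> (x, h x) \<in> S" for x
      using h h0 unfolding version_space_def by auto
    ultimately show ?thesis unfolding Pb_def by (simp split: option.splits)
  qed
  show "tau A H h0 S = tau A H h S"
    unfolding tau_def[of A H h0] \<tau>_def[symmetric]
  proof (rule Least_equality)
    show "Pb A H h0 S \<tau>" using same P by simp
    show "\<tau> \<le> y" if "Pb A H h0 S y" for y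
    proof (rule ccontr)
      assume "\<not> \<tau> \<le> y"
      then show False using same[of y] that notP[of y] by simp
    qed
  qed
qed

lemma Bif_eq:
  fixes H :: "('x \<Rightarrow> 'y::finite) set"
  assumes h: "h \<in> version_space H S" and tm: "A (run A h t) = None"
  shows "Bif A H S = A (run A h (tau A H h S))"
proof -
  define h0 where "h0 = (SOME h. h \<in> version_space H S)"
  have ne: "version_space H S \<noteq> {}" using h by auto
  have h0: "h0 \<in> version_space H S" unfolding h0_def using h by (rule someI[of _ h])
  note k = key[where A=A and t=t, OF h h0 tm]
  show ?thesis unfolding Bif_def using ne k h0_def[symmetric] by simp
qed

lemma per_h:
  fixes H :: "('x \<Rightarrow> 'y::finite) set"
  assumes hH: "h \<in> H" and tm: "A (run A h t0) = None"
  defines "B \<equiv> Bif A H"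
  shows "terminates B h" "final B h \<subseteq> final A h"
    "version_space H (final B h) = version_space H (final A h)"
    "\<And>t x. B (run B h t) = Some x \<Longrightarrow> 2 \<le> card (resp_set H x (run B h t))"
proof -
  define S where "S t = run B h t" for t
  define \<tau> where "\<tau> t = tau A H h (S t)" for t
  define a where "a = run A h"
  define TA where "TA = (LEAST t. A (a t) = None)"
  have TA: "A (a TA) = None" unfolding TA_def a_def by (rule LeastI[of _ t0]) (rule tm)
  have vs: "h \<in> version_space H (S t)" for t unfolding S_def by (rule in_vs_run[OF hH])
  have Bt: "B (S t) = A (a (\<tau> t))" for t
    unfolding B_def \<tau>_def a_def using Bif_eq[where A=A, OF vs tm] by simp
  have P: "Pb A H h (S t) (\<tau> t)" for t
    unfolding \<tau>_def tau_def by (rule LeastI_ex) (rule Pb_ex[of A h t0 H, OF tm])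
  have notP: "\<not> Pb A H h (S t) s" if "s < \<tau> t" for s t
    using that unfolding \<tau>_def tau_def by (rule not_less_Least)
  have leTA: "\<tau> t \<le> TA" for t
    unfolding \<tau>_def tau_def by (rule Least_le) (use TA in \<open>simp add: Pb_def a_def\<close>)
  have Ssuc: "S (Suc t) = (case B (S t) of None \<Rightarrow> S t | Some x \<Rightarrow> insert (x, h x) (S t))" for t
    unfolding S_def by simp
  have inc: "\<tau> t < \<tau> (Suc t)" if "B (S t) = Some x" for t x
  proof (rule ccontr)
    assume "\<not> \<tau> t < \<tau> (Suc t)"
    then have le: "\<tau> (Suc t) \<le> \<tau> t" by simp
    have SS: "S (Suc t) = insert (x, h x) (S t)" using Ssuc that by simp
    have Pn: "Pb A H h (S (Suc t)) (\<tau> (Suc t))" by (rule P)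
    show False
    proof (cases "\<tau> (Suc t) = \<tau> t")
      case True
      then show ?thesis using Pn SS that Bt[of t] unfolding Pb_def a_def by simp
    next
      case False
      then have "\<tau> (Suc t) < \<tau> t" using le by simp
      then show ?thesis using notP Pb_anti[OF Pn] SS by blast
    qed
  qed
  have sub: "S t \<subseteq> a (\<tau> t)" for t
  proof (induction t)
    case 0 then show ?case unfolding S_def by simp
  next
    case (Suc t)
    show ?case
    proof (cases "B (S t)")
      case None
      then have "S (Suc t) = S t" using Ssuc by simp
      moreover have "\<tau> (Suc t) = \<tau> t" unfolding \<tau>_def using calculation by simp
      ultimately show ?thesis using Suc by simp
    next
      case (Some x)
      have "a (\<tau> t) \<subseteq> a (Suc (\<tau> t))" unfolding a_def by (rule run_mono) simp
      moreover have "a (Suc (\<tau> t)) \<subseteq> a (\<tau> (Suc t))"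
        unfolding a_def by (rule run_mono) (use inc[OF Some] in simp)
      moreover have "(x, h x) \<in> a (Suc (\<tau> t))" using Some Bt[of t] unfolding a_def by simp
      ultimately show ?thesis using Suc Ssuc[of t] Some by auto
    qed
  qed
  have ex: "\<exists>t. B (S t) = None"
  proof (rule ccontr)
    assume na: "\<not> (\<exists>t. B (S t) = None)"
    have nn: "B (S t) \<noteq> None" for t using na by simp
    have "t \<le> \<tau> t" for t
    proof (induction t)
      case (Suc t)
      obtain x where "B (S t) = Some x" using nn by auto
      then show ?case using inc Suc by fastforce
    qed simp
    then show False using leTA[of "Suc TA"] by (metis Suc_n_not_le_n le_trans)
  qed
  then show "terminates B h" unfolding terminates_def S_def by blast
  define ts where "ts = (LEAST t. B (S t) = None)"
  have ts: "B (S ts) = None" unfolding ts_def by (rule LeastI_ex) (rule ex)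
  have fB: "final B h = S ts" unfolding final_def ts_def S_def by simp
  have fA: "final A h = a TA" unfolding final_def TA_def a_def by simp
  have tTA: "\<tau> ts = TA"
  proof -
    have "A (a (\<tau> ts)) = None" using ts Bt by simp
    then have "TA \<le> \<tau> ts" unfolding TA_def by (rule Least_le)
    then show ?thesis using leTA[of ts] by simp
  qed
  show "final B h \<subseteq> final A h" using fB fA sub[of ts] tTA by simp
  show "version_space H (final B h) = version_space H (final A h)"
  proof
    show "version_space H (final A h) \<subseteq> version_space H (final B h)"
      using vs_anti[OF sub[of ts]] fB fA tTA by simp
    show "version_space H (final B h) \<subseteq> version_space H (final A h)"
    proof
      fix h' assume h': "h' \<in> version_space H (final B h)"
      then have h'H: "h' \<in> H" unfolding version_space_def by simp
      have "run A h' TA = run A h TA"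
        using key(1)[where A=A and t=t0, OF vs[of ts] h'[unfolded fB] tm] tTA
        unfolding \<tau>_def by simp
      then show "h' \<in> version_space H (final A h)"
        using in_vs_run[OF h'H, of A TA] fA a_def by simp
    qed
  qed
  fix t x assume "B (run B h t) = Some x"
  then have Bx: "B (S t) = Some x" unfolding S_def .
  then have "2 \<le> card (resp_set H x (a (\<tau> t)))" using P[of t] Bt[of t] unfolding Pb_def a_def by simp
  moreover have "resp_set H x (a (\<tau> t)) \<subseteq> resp_set H x (S t)"
    unfolding resp_set_def using vs_anti[OF sub[of t]] by blast
  ultimately show "2 \<le> card (resp_set H x (run B h t))"
    unfolding S_def by (meson card_mono finite order_trans)
qed

theorem lemma1:
  fixes H :: "('x::finite \<Rightarrow> 'y::finite) set"
    and c :: "'x \<Rightarrow> 'y \<Rightarrow> real"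
    and f :: "('x \<times> 'y) set \<Rightarrow> real"
    and Q :: real
  assumes "\<forall>x y. c x y \<ge> 0"
    and "Q > 0"
    and "\<forall>S. f S \<ge> 0"
    and "learning_objective f H"
    and "\<exists>A. optimal_alg c f Q H A"
  shows "\<exists>A. optimal_alg c f Q H A \<and> bifurcating H A"
proof -
  obtain A where A: "optimal_alg c f Q H A" using assms(5) by blast
  obtain g where g: "\<forall>S. f S = g (version_space H S)"
    using assms(4) unfolding learning_objective_def by blast
  define B where "B = Bif A H"
  have ach: "achieves f Q H A" using A unfolding optimal_alg_def by simp
  have tmA: "\<exists>t. A (run A h t) = None" if "h \<in> H" for h
    using ach that unfolding achieves_def terminates_def by blast
  have achB: "achieves f Q H B"
    unfolding achieves_def
  proof
    fix h assume h: "h \<in> H"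
    obtain t0 where t0: "A (run A h t0) = None" using tmA[OF h] by blast
    note p = per_h[where A=A, OF h t0]
    have "f (final B h) = f (final A h)" using g p(3) unfolding B_def by simp
    then show "terminates B h \<and> Q \<le> f (final B h)"
      using p(1) ach h unfolding achieves_def B_def by simp
  qed
  have costle: "cost_set c (final B h) \<le> cost_set c (final A h)" if h: "h \<in> H" for h
  proof -
    obtain t0 where t0: "A (run A h t0) = None" using tmA[OF h] by blast
    note p = per_h[where A=A, OF h t0]
    show ?thesis unfolding cost_set_def
      by (rule sum_mono2) (use p(2) assms(1) in \<open>auto simp: B_def\<close>)
  qed
  have le: "alg_cost c H B \<le> alg_cost c H A"
  proof (cases "H = {}")
    case True then show ?thesis by (simp add: alg_cost_def)
  next
    case False
    have fin: "finite H" by simp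
    show ?thesis unfolding alg_cost_def
    proof (subst Max_le_iff)
      show "\<forall>a\<in>(\<lambda>h. cost_set c (final B h)) ` H. a \<le> Max ((\<lambda>h. cost_set c (final A h)) ` H)"
        using costle fin by (auto intro!: order_trans[OF costle Max_ge])
    qed (use False fin in auto)
  qed
  have "optimal_alg c f Q H B"
    using A achB le unfolding optimal_alg_def by (meson order_trans)
  moreover have "bifurcating H B"
    unfolding bifurcating_def
  proof (intro allI ballI impI)
    fix t h x assume h: "h \<in> H" and "B (run B h t) = Some x"
    obtain t0 where t0: "A (run A h t0) = None" using tmA[OF h] by blast
    show "2 \<le> card (resp_set H x (run B h t))"
      using per_h(4)[where A=A, OF h t0] \<open>B (run B h t) = Some x\<close> unfolding B_def by simp
  qed
  ultimately show ?thesis by blast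
qed

end
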